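(* Consider the parallel multiple access channel power allocation game and the replicator dynamics described in the context. Let $p(0)=(p_1(0),\dots,p_K(0))\in\Delta$ be an initial power profile and let $\mathcal{A}_k=\mathrm{supp}(p_k(0))\subseteq\mathcal{A}$. Let $\mathfrak{G}^0$ be the reduced game played over $\Delta^0=\prod_k P_k\Delta(\mathcal{A}_k)$ (user $k$ allocates total power $P_k$ only among the nodes in $\mathcal{A}_k$) with payoffs $u_k^0(p)=\sum_{\alpha\in\mathcal{A}_k} b_\alpha\log\bigl(1+\frac{g_{k\alpha}p_{k\alpha}}{\sigma_\alpha^2+\sum_{\ell\neq k}g_{\ell\alpha}p_{\ell\alpha}}\bigr)$. Then the solution of the replicator dynamics starting at $p(0)$ converges to the (almost surely unique) Nash equilibrium of the reduced game $\mathfrak{G}^0$.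
   Context: Setting: users $\mathcal{K}=\{1,\dots,K\}$, nodes $\mathcal{A}=\{1,\dots,A\}$. User $k$ has maximum power $P_k>0$ and strategy set $\Delta_k=\{p_k\in\mathbb{R}^{\mathcal{A}}: p_{k\alpha}\ge 0,\ \sum_\alpha p_{k\alpha}=P_k\}$; $\Delta=\prod_k\Delta_k$. Payoffs of the full game: $u_k(p)=\sum_{\alpha\in\mathcal{A}} b_\alpha\log\bigl(1+\frac{g_{k\alpha}p_{k\alpha}}{\sigma_\alpha^2+\sum_{\ell\neq k}g_{\ell\alpha}p_{\ell\alpha}}\bigr)$ with constants $b_\alpha>0$, $\sigma_\alpha^2>0$ and channel gains $g_{k\alpha}>0$ drawn from a continuous (nonatomic) probability distribution on the positive reals. For a finite set $S$, $P_k\Delta(S)$ denotes $\{x\in\mathbb{R}^S: x_\alpha\ge0,\ \sum_\alpha x_\alpha=P_k\}$. $\mathrm{supp}(p_k)=\{\alpha:p_{k\alpha}>0\}$. A Nash equilibrium of a game is a profile from which no user can increase his payoff by a unilateral deviation within his strategy set. Define $v_{k\alpha}(p)=\frac{b_\alpha g_{k\alpha}}{\sigma_\alpha^2+\sum_{\ell}g_{\ell\alpha}p_{\ell\alpha}}$ and $v_k(p)=P_k^{-1}\sum_\beta p_{k\beta}v_{k\beta}(p)$. The replicator dynamics are $\frac{dp_{k\alpha}}{dt}=p_{k\alpha}\bigl(v_{k\alpha}(p(t))-v_k(p(t))\bigr)$. *)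

theory Defs
  imports "HOL-Probability.Probability"
begin

text \<open>A power profile is p :: 'k => 'n => real, p k a = power of user k on node a.
  Channel gains are g :: 'k * 'n => real; noise variances sigma2 a (= sigma_a squared).\<close>

definition strat_space :: "('k \<Rightarrow> real) \<Rightarrow> ('k::finite \<Rightarrow> 'n::finite \<Rightarrow> real) set" where
  "strat_space P = {p. \<forall>k. (\<forall>a. p k a \<ge> 0) \<and> (\<Sum>a\<in>UNIV. p k a) = P k}"

definition red_strat_space ::
  "('k \<Rightarrow> real) \<Rightarrow> ('k \<Rightarrow> 'n set) \<Rightarrow> ('k::finite \<Rightarrow> 'n::finite \<Rightarrow> real) set" where
  "red_strat_space P S = {p. \<forall>k. (\<forall>a. p k a \<ge> 0) \<and> (\<forall>a. a \<notin> S k \<longrightarrow> p k a = 0)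
                                  \<and> (\<Sum>a\<in>S k. p k a) = P k}"

definition supp_vec :: "('n \<Rightarrow> real) \<Rightarrow> 'n set" where
  "supp_vec x = {a. x a > 0}"

definition red_payoff ::
  "('n \<Rightarrow> real) \<Rightarrow> ('n \<Rightarrow> real) \<Rightarrow> ('k \<times> 'n \<Rightarrow> real) \<Rightarrow> ('k \<Rightarrow> 'n set)
   \<Rightarrow> 'k \<Rightarrow> ('k::finite \<Rightarrow> 'n::finite \<Rightarrow> real) \<Rightarrow> real" where
  "red_payoff b sigma2 g S k p =
     (\<Sum>a\<in>S k. b a * ln (1 + g (k, a) * p k a /
                           (sigma2 a + (\<Sum>l\<in>UNIV - {k}. g (l, a) * p l a))))"

definition is_nash :: "('k \<Rightarrow> 'x) set \<Rightarrow> ('k \<Rightarrow> ('k \<Rightarrow> 'x) \<Rightarrow> real) \<Rightarrow> ('k \<Rightarrow> 'x) \<Rightarrow> bool" where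
  "is_nash X u q \<longleftrightarrow> q \<in> X \<and> (\<forall>k y. q(k := y) \<in> X \<longrightarrow> u k (q(k := y)) \<le> u k q)"

definition vel :: "('n \<Rightarrow> real) \<Rightarrow> ('n \<Rightarrow> real) \<Rightarrow> ('k \<times> 'n \<Rightarrow> real)
   \<Rightarrow> ('k::finite \<Rightarrow> 'n::finite \<Rightarrow> real) \<Rightarrow> 'k \<Rightarrow> 'n \<Rightarrow> real" where
  "vel b sigma2 g p k a = b a * g (k, a) / (sigma2 a + (\<Sum>l\<in>UNIV. g (l, a) * p l a))"

definition avg_vel :: "('k \<Rightarrow> real) \<Rightarrow> ('n \<Rightarrow> real) \<Rightarrow> ('n \<Rightarrow> real) \<Rightarrow> ('k \<times> 'n \<Rightarrow> real)
   \<Rightarrow> ('k::finite \<Rightarrow> 'n::finite \<Rightarrow> real) \<Rightarrow> 'k \<Rightarrow> real" where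
  "avg_vel P b sigma2 g p k = (\<Sum>a\<in>UNIV. p k a * vel b sigma2 g p k a) / P k"

definition replicator_solution :: "('k \<Rightarrow> real) \<Rightarrow> ('n \<Rightarrow> real) \<Rightarrow> ('n \<Rightarrow> real)
   \<Rightarrow> ('k \<times> 'n \<Rightarrow> real) \<Rightarrow> (real \<Rightarrow> 'k::finite \<Rightarrow> 'n::finite \<Rightarrow> real) \<Rightarrow> bool" where
  "replicator_solution P b sigma2 g p \<longleftrightarrow>
     (\<forall>t\<ge>0. \<forall>k a. ((\<lambda>s. p s k a) has_real_derivative
         (p t k a * (vel b sigma2 g (p t) k a - avg_vel P b sigma2 g (p t) k)))
         (at t within {0..}))"

end

theory Submission
  imports Defs
begin


lemma null_lin_ln:
  fixes mu :: "real measure" and c :: "'e::finite \<Rightarrow> real"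
  assumes prob: "prob_space mu"
    and borel: "sets mu = sets borel"
    and nonatomic: "\<forall>x. emeasure mu {x} = 0"
    and positive: "AE x in mu. x > 0"
    and c0: "c e0 \<noteq> 0"
  shows "AE g in PiM UNIV (\<lambda>_::'e. mu). (\<Sum>e\<in>UNIV. c e * ln (g e)) \<noteq> 0"
proof -
  interpret product_sigma_finite "\<lambda>_::'e. mu"
    unfolding product_sigma_finite_def using prob prob_space_imp_sigma_finite by blast
  have sp: "space mu = UNIV" using sets_eq_imp_space_eq[OF borel] by simp
  have [measurable_cong]: "sets mu = sets borel" by (rule borel)
  define N where "N = {g \<in> space (PiM UNIV (\<lambda>_::'e. mu)). (\<Sum>e\<in>UNIV. c e * ln (g e)) = 0}"
  have Nm: "N \<in> sets (PiM UNIV (\<lambda>_::'e. mu))"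
    unfolding N_def by measurable
  have U: "(UNIV::'e set) = insert e0 (UNIV - {e0})" by auto
  have inner: "(\<integral>\<^sup>+ y. indicator N (x(e0 := y)) \<partial>mu) = 0" for x :: "'e \<Rightarrow> real"
  proof -
    define r where "r = - (\<Sum>e\<in>UNIV - {e0}. c e * ln (x e)) / c e0"
    have "{r'. r' = exp r} \<in> null_sets mu"
      using nonatomic borel by (auto simp: null_sets_def)
    hence ae1: "AE y in mu. y \<noteq> exp r" using AE_not_in by force
    have "AE y in mu. indicator N (x(e0 := y)) = (0::ennreal)"
      using ae1 positive
    proof eventually_elim
      case (elim y)
      have "(\<Sum>e\<in>UNIV. c e * ln ((x(e0 := y)) e)) = c e0 * ln y + (\<Sum>e\<in>UNIV - {e0}. c e * ln (x e))"
        by (subst U, subst sum.insert) auto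
      also have "\<dots> = c e0 * (ln y - r)" using c0 by (simp add: r_def field_simps)
      also have "\<dots> \<noteq> 0"
      proof
        assume "c e0 * (ln y - r) = 0"
        hence "ln y = r" using c0 by simp
        hence "y = exp r" using elim by auto
        thus False using elim by simp
      qed
      finally show ?case by (simp add: N_def)
    qed
    hence "(\<integral>\<^sup>+ y. indicator N (x(e0 := y)) \<partial>mu) = (\<integral>\<^sup>+ y. 0 \<partial>mu)" by (rule nn_integral_cong_AE)
    thus ?thesis by simp
  qed
  have "emeasure (PiM UNIV (\<lambda>_::'e. mu)) N = (\<integral>\<^sup>+ g. indicator N g \<partial>PiM UNIV (\<lambda>_::'e. mu))"
    using Nm by simp
  also have "\<dots> = (\<integral>\<^sup>+ g. indicator N g \<partial>PiM (insert e0 (UNIV - {e0})) (\<lambda>_::'e. mu))"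
    using U by simp
  also have "\<dots> = (\<integral>\<^sup>+ x. (\<integral>\<^sup>+ y. indicator N (x(e0 := y)) \<partial>mu) \<partial>PiM (UNIV - {e0}) (\<lambda>_::'e. mu))"
    apply (rule product_nn_integral_insert)
    using Nm U by auto
  also have "\<dots> = 0" by (simp add: inner)
  finally have "N \<in> null_sets (PiM UNIV (\<lambda>_::'e. mu))" using Nm by auto
  hence "AE g in PiM UNIV (\<lambda>_::'e. mu). g \<notin> N" by (rule AE_not_in)
  thus ?thesis by eventually_elim (auto simp: N_def space_PiM sp)
qed



definition circ :: "('k::finite \<times> 'n::finite \<Rightarrow> real) \<Rightarrow> bool" where
  "circ c \<longleftrightarrow> (\<forall>k. (\<Sum>a\<in>UNIV. c (k,a)) = 0) \<and> (\<forall>a. (\<Sum>k\<in>UNIV. c (k,a)) = 0)"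

definition goodc :: "('k::finite \<times> 'n::finite) set \<Rightarrow> ('k \<times> 'n \<Rightarrow> real) \<Rightarrow> bool" where
  "goodc E c \<longleftrightarrow> circ c \<and> (\<exists>e. c e \<noteq> 0) \<and> (\<forall>e. c e \<noteq> 0 \<longrightarrow> e \<in> E)"

definition cE :: "('k::finite \<times> 'n::finite) set \<Rightarrow> ('k \<times> 'n \<Rightarrow> real)" where
  "cE E = (SOME c. goodc E c)"

definition generic :: "('k::finite \<times> 'n::finite \<Rightarrow> real) \<Rightarrow> bool" where
  "generic g \<longleftrightarrow> (\<forall>E. (\<exists>c. goodc E c) \<longrightarrow> (\<Sum>e\<in>UNIV. cE E e * ln (g e)) \<noteq> 0)"

lemma sum_pairs: "(\<Sum>e\<in>(UNIV::('k::finite \<times> 'n::finite) set). f e) = (\<Sum>k\<in>UNIV. \<Sum>a\<in>UNIV. f (k,a))"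
  by (subst sum.cartesian_product) (simp add: UNIV_Times_UNIV[symmetric] del: UNIV_Times_UNIV)

lemma circ_log:
  fixes c :: "'k::finite \<times> 'n::finite \<Rightarrow> real"
  assumes "circ c" and "\<And>k a. c (k,a) \<noteq> 0 \<Longrightarrow> g (k,a) = lam k * mu a"
    and "\<And>k. lam k > 0" and "\<And>a. mu a > 0"
  shows "(\<Sum>e\<in>UNIV. c e * ln (g e)) = 0"
proof -
  have "(\<Sum>e\<in>UNIV. c e * ln (g e)) = (\<Sum>k\<in>UNIV. \<Sum>a\<in>UNIV. c (k,a) * ln (g (k,a)))"
    by (rule sum_pairs)
  also have "\<dots> = (\<Sum>k\<in>UNIV. \<Sum>a\<in>UNIV. c (k,a) * ln (lam k) + c (k,a) * ln (mu a))"
  proof (intro sum.cong refl)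
    fix k a
    show "c (k,a) * ln (g (k,a)) = c (k,a) * ln (lam k) + c (k,a) * ln (mu a)"
      using assms(2)[of k a] assms(3)[of k] assms(4)[of a]
      by (cases "c (k,a) = 0") (auto simp: ln_mult algebra_simps)
  qed
  also have "\<dots> = (\<Sum>k\<in>UNIV. ln (lam k) * (\<Sum>a\<in>UNIV. c (k,a))) + (\<Sum>a\<in>UNIV. ln (mu a) * (\<Sum>k\<in>UNIV. c (k,a)))"
  proof -
    have 1: "(\<Sum>k\<in>UNIV. \<Sum>a\<in>UNIV. c (k,a) * ln (lam k) + c (k,a) * ln (mu a))
       = (\<Sum>k\<in>UNIV. \<Sum>a\<in>UNIV. c (k,a) * ln (lam k)) + (\<Sum>k\<in>UNIV. \<Sum>a\<in>UNIV. c (k,a) * ln (mu a))"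
      by (simp only: sum.distrib)
    have 2: "(\<Sum>k\<in>UNIV. \<Sum>a\<in>UNIV. c (k,a) * ln (lam k)) = (\<Sum>k\<in>UNIV. ln (lam k) * (\<Sum>a\<in>UNIV. c (k,a)))"
      by (simp only: sum_distrib_left mult.commute)
    have 3: "(\<Sum>k\<in>UNIV. \<Sum>a\<in>UNIV. c (k,a) * ln (mu a)) = (\<Sum>a\<in>UNIV. \<Sum>k\<in>UNIV. c (k,a) * ln (mu a))"
      by (rule sum.swap)
    have 4: "(\<Sum>a\<in>UNIV. \<Sum>k\<in>UNIV. c (k,a) * ln (mu a)) = (\<Sum>a\<in>UNIV. ln (mu a) * (\<Sum>k\<in>UNIV. c (k,a)))"
      by (simp only: sum_distrib_left mult.commute)
    show ?thesis using 1 2 3 4 by simp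
  qed
  also have "\<dots> = 0" using assms(1) by (simp add: circ_def)
  finally show ?thesis .
qed

lemma cont_coord [continuous_intros]: "continuous_on A (\<lambda>x::'a \<Rightarrow> 'b \<Rightarrow> real. x k a)"
  by (rule continuous_on_product_then_coordinatewise[OF continuous_on_product_then_coordinatewise[OF continuous_on_id]])

lemma compact_PiE_UNIV:
  assumes "\<And>i. compact (C i)"
  shows "compact (PiE UNIV C :: ('a \<Rightarrow> 'b::topological_space) set)"
proof -
  have "compactin (product_topology (\<lambda>i. euclidean) UNIV) (PiE UNIV C)"
    using assms by (simp add: compactin_PiE)
  thus ?thesis by (simp add: euclidean_product_topology)
qed

locale game =
  fixes P :: "'k::finite \<Rightarrow> real" and b s2 :: "'n::finite \<Rightarrow> real" and g :: "'k \<times> 'n \<Rightarrow> real"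
  assumes P_pos: "\<And>k. P k > 0" and b_pos: "\<And>a. b a > 0" and s_pos: "\<And>a. s2 a > 0"
    and g_pos: "\<And>e. g e > 0"
begin

definition D :: "('k \<Rightarrow> 'n \<Rightarrow> real) \<Rightarrow> 'n \<Rightarrow> real" where
  "D x a = s2 a + (\<Sum>l\<in>UNIV. g (l,a) * x l a)"
definition Phi :: "('k \<Rightarrow> 'n \<Rightarrow> real) \<Rightarrow> real" where
  "Phi x = (\<Sum>a\<in>UNIV. b a * ln (D x a))"

lemma D_ge: "(\<And>l. x l a \<ge> 0) \<Longrightarrow> D x a \<ge> s2 a"
proof -
  assume a: "\<And>l. x l a \<ge> 0"
  have "0 \<le> (\<Sum>l\<in>UNIV. g (l,a) * x l a)"
    by (intro sum_nonneg) (simp add: mult_nonneg_nonneg less_imp_le g_pos a)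
  thus ?thesis unfolding D_def by simp
qed

lemma D_pos: "(\<And>l. x l a \<ge> 0) \<Longrightarrow> D x a > 0"
  using D_ge s_pos by (meson less_le_trans)

lemma vel_eq: "vel b s2 g x k a = b a * g (k,a) / D x a"
  by (simp add: vel_def D_def)

lemma red_nonneg: "x \<in> red_strat_space P S \<Longrightarrow> x k a \<ge> 0"
  by (simp add: red_strat_space_def)
lemma red_out: "x \<in> red_strat_space P S \<Longrightarrow> a \<notin> S k \<Longrightarrow> x k a = 0"
  by (simp add: red_strat_space_def)
lemma red_sum: "x \<in> red_strat_space P S \<Longrightarrow> sum (x k) (S k) = P k"
  by (simp add: red_strat_space_def)
lemma red_sum_UNIV: assumes "x \<in> red_strat_space P S" shows "sum (x k) UNIV = P k"
proof -
  have "sum (x k) UNIV = sum (x k) (S k)"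
    by (rule sum.mono_neutral_right) (use red_out[OF assms] in auto)
  thus ?thesis using red_sum[OF assms] by simp
qed

lemma payoff_term:
  assumes "\<And>l. x l a \<ge> 0"
  shows "ln (1 + g (k,a) * x k a / (s2 a + (\<Sum>l\<in>UNIV - {k}. g (l,a) * x l a)))
         = ln (D x a) - ln (s2 a + (\<Sum>l\<in>UNIV - {k}. g (l,a) * x l a))"
proof -
  define W where "W = s2 a + (\<Sum>l\<in>UNIV - {k}. g (l,a) * x l a)"
  have W: "W > 0" unfolding W_def using s_pos[of a] g_pos assms
    by (smt (verit) mult_nonneg_nonneg sum_nonneg)
  have "D x a = W + g (k,a) * x k a"
    unfolding D_def W_def by (simp add: sum.remove[of UNIV k])
  hence "1 + g (k,a) * x k a / W = D x a / W" using W by (simp add: field_simps)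
  moreover have "D x a > 0" using D_pos assms by blast
  ultimately show ?thesis using W by (simp add: W_def[symmetric] ln_div)
qed

lemma dev:
  assumes x: "x \<in> red_strat_space P S" and x': "x(k:=y) \<in> red_strat_space P S"
  shows "red_payoff b s2 g S k (x(k:=y)) - red_payoff b s2 g S k x = Phi (x(k:=y)) - Phi x"
proof -
  let ?x' = "x(k:=y)"
  define W where "W a = s2 a + (\<Sum>l\<in>UNIV - {k}. g (l,a) * x l a)" for a
  have W': "(\<Sum>l\<in>UNIV - {k}. g (l,a) * ?x' l a) = (\<Sum>l\<in>UNIV - {k}. g (l,a) * x l a)" for a
    by (rule sum.cong) auto
  have "red_payoff b s2 g S k ?x' = (\<Sum>a\<in>S k. b a * (ln (D ?x' a) - ln (W a)))"
    unfolding red_payoff_def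
  proof (rule sum.cong)
    fix a assume "a \<in> S k"
    have "ln (1 + g (k,a) * ?x' k a / (s2 a + (\<Sum>l\<in>UNIV - {k}. g (l,a) * ?x' l a)))
         = ln (D ?x' a) - ln (s2 a + (\<Sum>l\<in>UNIV - {k}. g (l,a) * ?x' l a))"
      by (rule payoff_term) (rule red_nonneg[OF x'])
    thus "b a * ln (1 + g (k,a) * ?x' k a / (s2 a + (\<Sum>l\<in>UNIV - {k}. g (l,a) * ?x' l a)))
         = b a * (ln (D ?x' a) - ln (W a))" using W'[of a] by (simp add: W_def)
  qed simp
  moreover have "red_payoff b s2 g S k x = (\<Sum>a\<in>S k. b a * (ln (D x a) - ln (W a)))"
    unfolding red_payoff_def W_def
    by (rule sum.cong[OF refl], subst payoff_term) (auto intro: red_nonneg[OF x])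
  ultimately have "red_payoff b s2 g S k ?x' - red_payoff b s2 g S k x
      = (\<Sum>a\<in>S k. b a * (ln (D ?x' a) - ln (D x a)))"
    by (simp add: sum_subtractf[symmetric] algebra_simps)
  also have "\<dots> = (\<Sum>a\<in>UNIV. b a * (ln (D ?x' a) - ln (D x a)))"
  proof (rule sum.mono_neutral_left)
    show "\<forall>a\<in>UNIV - S k. b a * (ln (D ?x' a) - ln (D x a)) = 0"
    proof
      fix a assume "a \<in> UNIV - S k"
      hence "?x' l a = x l a" for l
        using red_out[OF x, of a k] red_out[OF x', of a k] by (cases "l = k") auto
      thus "b a * (ln (D ?x' a) - ln (D x a)) = 0" by (simp add: D_def)
    qed
  qed auto
  also have "\<dots> = Phi ?x' - Phi x"
    unfolding Phi_def by (simp add: sum_subtractf[symmetric] algebra_simps)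
  finally show ?thesis .
qed

lemma nash_iff:
  "is_nash (red_strat_space P S) (red_payoff b s2 g S) q \<longleftrightarrow>
   q \<in> red_strat_space P S \<and> (\<forall>k y. q(k:=y) \<in> red_strat_space P S \<longrightarrow> Phi (q(k:=y)) \<le> Phi q)"
  unfolding is_nash_def using dev by (smt (verit))

lemma D_upd: "D (x(k:=y)) c = D x c + g (k,c) * (y c - x k c)"
proof -
  have "(\<Sum>l\<in>UNIV. g (l,c) * (x(k:=y)) l c) = g (k,c) * y c + (\<Sum>l\<in>UNIV-{k}. g (l,c) * x l c)"
    by (simp add: sum.remove[of UNIV k])
  moreover have "(\<Sum>l\<in>UNIV. g (l,c) * x l c) = g (k,c) * x k c + (\<Sum>l\<in>UNIV-{k}. g (l,c) * x l c)"
    by (simp add: sum.remove[of UNIV k])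
  ultimately show ?thesis unfolding D_def by (simp add: algebra_simps)
qed

lemma kkt:
  assumes nash: "is_nash (red_strat_space P S) (red_payoff b s2 g S) q"
    and qa: "q k a > 0" and bS: "\<beta> \<in> S k"
  shows "vel b s2 g q k \<beta> \<le> vel b s2 g q k a"
proof (rule ccontr)
  assume "\<not> ?thesis"
  hence gt: "b \<beta> * g (k,\<beta>) / D q \<beta> - b a * g (k,a) / D q a > 0" by (simp add: vel_eq)
  have q: "q \<in> red_strat_space P S" using nash by (simp add: is_nash_def)
  have aS: "a \<in> S k" using red_out[OF q, of a k] qa by auto
  have ba: "\<beta> \<noteq> a" using gt by auto
  have Db: "D q \<beta> > 0" and Da: "D q a > 0" using D_pos red_nonneg[OF q] by auto
  define \<phi> where "\<phi> e = b \<beta> * ln (D q \<beta> + g (k,\<beta>) * e) + b a * ln (D q a - g (k,a) * e)" for e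
  have "DERIV \<phi> 0 :> b \<beta> * (g (k,\<beta>) / D q \<beta>) + b a * (- g (k,a) / D q a)"
    unfolding \<phi>_def using Db Da
    by (auto intro!: derivative_eq_intros simp: field_simps)
  moreover have "b \<beta> * (g (k,\<beta>) / D q \<beta>) + b a * (- g (k,a) / D q a) > 0" using gt by simp
  ultimately obtain d where d: "d > 0" "\<And>h. h > 0 \<Longrightarrow> h < d \<Longrightarrow> \<phi> 0 < \<phi> (0 + h)"
    using DERIV_pos_inc_right by blast
  define h where "h = min (d/2) (q k a)"
  have h: "h > 0" "h < d" "h \<le> q k a" using d qa by (auto simp: h_def)
  define y where "y = (q k)(\<beta> := q k \<beta> + h, a := q k a - h)"
  have ydiff: "y c - q k c = (if c = \<beta> then h else 0) - (if c = a then h else 0)" for c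
    using ba by (auto simp: y_def)
  have q': "q(k:=y) \<in> red_strat_space P S"
    unfolding red_strat_space_def
  proof (intro CollectI allI conjI impI)
    fix l c
    show "0 \<le> (q(k:=y)) l c" using red_nonneg[OF q] h ba by (auto simp: y_def)
    show "c \<notin> S l \<Longrightarrow> (q(k:=y)) l c = 0" using red_out[OF q] aS bS by (auto simp: y_def)
  next
    fix l
    show "sum ((q(k:=y)) l) (S l) = P l"
    proof (cases "l = k")
      case False thus ?thesis using red_sum[OF q] by simp
    next
      case True
      have "sum y (S k) = sum (\<lambda>c. q k c + ((if c = \<beta> then h else 0) - (if c = a then h else 0))) (S k)"
        by (rule sum.cong) (auto simp: ydiff[symmetric])
      also have "\<dots> = sum (q k) (S k)" using aS bS
        by (simp add: sum.distrib sum_subtractf)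
      finally show ?thesis using True red_sum[OF q] by simp
    qed
  qed
  have Dc: "D (q(k:=y)) c = D q c + ((if c = \<beta> then g (k,\<beta>) * h else 0) - (if c = a then g (k,a) * h else 0))" for c
    by (simp add: D_upd ydiff right_diff_distrib)
  have "Phi (q(k:=y)) - Phi q = (\<Sum>c\<in>UNIV. b c * (ln (D (q(k:=y)) c) - ln (D q c)))"
    unfolding Phi_def by (simp add: sum_subtractf[symmetric] algebra_simps)
  also have "\<dots> = (\<Sum>c\<in>{\<beta>, a}. b c * (ln (D (q(k:=y)) c) - ln (D q c)))"
    by (rule sum.mono_neutral_right) (auto simp: Dc)
  also have "\<dots> = \<phi> h - \<phi> 0"
    using ba by (simp add: Dc \<phi>_def algebra_simps)
  also have "\<dots> > 0" using d(2)[OF h(1,2)] by simp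
  finally have "Phi (q(k:=y)) > Phi q" by simp
  thus False using nash q' unfolding nash_iff by force
qed

lemma pos_entry:
  assumes x: "x \<in> red_strat_space P S" shows "\<exists>a. x k a > 0"
proof (rule ccontr)
  assume "\<not> ?thesis"
  hence "x k a = 0" for a using red_nonneg[OF x, of k a] by (metis less_eq_real_def)
  hence "sum (x k) UNIV = 0" by simp
  thus False using red_sum_UNIV[OF x, of k] P_pos[of k] by simp
qed

lemma lam_props:
  assumes nash: "is_nash (red_strat_space P S) (red_payoff b s2 g S) q"
  obtains lam where "\<And>k c. c \<in> S k \<Longrightarrow> vel b s2 g q k c \<le> lam k"
    "\<And>k c. q k c > 0 \<Longrightarrow> vel b s2 g q k c = lam k"
proof -
  have q: "q \<in> red_strat_space P S" using nash by (simp add: is_nash_def)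
  define a0 where "a0 k = (SOME a. q k a > 0)" for k
  have a0: "q k (a0 k) > 0" for k unfolding a0_def using pos_entry[OF q] by (metis someI_ex)
  have inS: "q k c > 0 \<Longrightarrow> c \<in> S k" for k c using red_out[OF q] by force
  show ?thesis
  proof (rule that[of "\<lambda>k. vel b s2 g q k (a0 k)"])
    fix k c assume "c \<in> S k" thus "vel b s2 g q k c \<le> vel b s2 g q k (a0 k)"
      using kkt[OF nash a0] by blast
  next
    fix k c assume "q k c > 0"
    thus "vel b s2 g q k c = vel b s2 g q k (a0 k)"
      using kkt[OF nash a0[of k] inS[OF \<open>q k c > 0\<close>]] kkt[OF nash \<open>q k c > 0\<close> inS[OF a0[of k]]] by simp
  qed
qed

lemma var_ineq:
  assumes nash: "is_nash (red_strat_space P S) (red_payoff b s2 g S) q"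
    and x: "x \<in> red_strat_space P S"
  shows "(\<Sum>k\<in>UNIV. \<Sum>a\<in>UNIV. x k a * vel b s2 g q k a) \<le> (\<Sum>k\<in>UNIV. \<Sum>a\<in>UNIV. q k a * vel b s2 g q k a)"
proof -
  have q: "q \<in> red_strat_space P S" using nash by (simp add: is_nash_def)
  obtain lam where l1: "\<And>k c. c \<in> S k \<Longrightarrow> vel b s2 g q k c \<le> lam k"
    and l2: "\<And>k c. q k c > 0 \<Longrightarrow> vel b s2 g q k c = lam k" using lam_props[OF nash] by blast
  show ?thesis
  proof (rule sum_mono)
    fix k
    have "(\<Sum>a\<in>UNIV. x k a * vel b s2 g q k a) \<le> (\<Sum>a\<in>UNIV. x k a * lam k)"
    proof (rule sum_mono)
      fix a show "x k a * vel b s2 g q k a \<le> x k a * lam k"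
        using l1[of a k] red_out[OF x, of a k] red_nonneg[OF x, of k a]
        by (cases "a \<in> S k") (auto intro: mult_left_mono)
    qed
    also have "\<dots> = lam k * P k" using red_sum_UNIV[OF x, of k] by (simp add: sum_distrib_right[symmetric])
    also have "\<dots> = (\<Sum>a\<in>UNIV. q k a * lam k)" using red_sum_UNIV[OF q, of k] by (simp add: sum_distrib_right[symmetric])
    also have "\<dots> = (\<Sum>a\<in>UNIV. q k a * vel b s2 g q k a)"
    proof (rule sum.cong[OF refl])
      fix a show "q k a * lam k = q k a * vel b s2 g q k a"
        using l2[of k a] red_nonneg[OF q, of k a] by (cases "q k a > 0") auto
    qed
    finally show "(\<Sum>a\<in>UNIV. x k a * vel b s2 g q k a) \<le> (\<Sum>a\<in>UNIV. q k a * vel b s2 g q k a)" .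
  qed
qed

definition Y :: "('k \<Rightarrow> 'n \<Rightarrow> real) \<Rightarrow> 'n \<Rightarrow> real" where
  "Y x a = (\<Sum>k\<in>UNIV. g (k,a) * x k a)"

lemma D_Y: "D x a = s2 a + Y x a" by (simp add: D_def Y_def)

lemma weighted: "(\<Sum>k\<in>UNIV. \<Sum>a\<in>UNIV. x k a * vel b s2 g q k a) = (\<Sum>a\<in>UNIV. b a / D q a * Y x a)"
proof -
  have "(\<Sum>k\<in>UNIV. \<Sum>a\<in>UNIV. x k a * vel b s2 g q k a) = (\<Sum>a\<in>UNIV. \<Sum>k\<in>UNIV. x k a * vel b s2 g q k a)"
    by (rule sum.swap)
  also have "\<dots> = (\<Sum>a\<in>UNIV. b a / D q a * Y x a)"
    unfolding Y_def sum_distrib_left by (intro sum.cong refl) (simp add: vel_eq)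
  finally show ?thesis .
qed

lemma unique:
  assumes gen: "generic g"
    and n1: "is_nash (red_strat_space P S) (red_payoff b s2 g S) q"
    and n2: "is_nash (red_strat_space P S) (red_payoff b s2 g S) q'"
  shows "q' = q"
proof -
  have q: "q \<in> red_strat_space P S" using n1 by (simp add: is_nash_def)
  have q': "q' \<in> red_strat_space P S" using n2 by (simp add: is_nash_def)
  have Dq: "D q a > 0" "D q' a > 0" for a using D_pos red_nonneg q q' by blast+
  have i1: "(\<Sum>a\<in>UNIV. b a / D q a * (Y q' a - Y q a)) \<le> 0"
    using var_ineq[OF n1 q'] unfolding weighted by (simp add: sum_subtractf right_diff_distrib)
  have i2: "(\<Sum>a\<in>UNIV. b a / D q' a * (Y q a - Y q' a)) \<le> 0"
    using var_ineq[OF n2 q] unfolding weighted by (simp add: sum_subtractf right_diff_distrib)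
  define T where "T a = b a * (Y q' a - Y q a)^2 / (D q a * D q' a)" for a
  have Tnn: "T a \<ge> 0" for a unfolding T_def using b_pos[of a] Dq[of a] by simp
  have Teq: "T a = b a / D q a * (Y q' a - Y q a) + b a / D q' a * (Y q a - Y q' a)" for a
    unfolding T_def using Dq[of a] by (simp add: D_Y field_simps power2_eq_square)
  have "(\<Sum>a\<in>UNIV. T a) \<le> 0" unfolding Teq sum.distrib using i1 i2 by simp
  hence "\<forall>a\<in>UNIV. T a = 0" using sum_nonneg_eq_0_iff[of UNIV T] Tnn
    by (simp add: order_antisym sum_nonneg)
  hence Yeq: "Y q' a = Y q a" for a 
  proof -
    have "b a * (Y q' a - Y q a)^2 / (D q a * D q' a) = 0" using \<open>\<forall>a\<in>UNIV. T a = 0\<close> by (simp add: T_def)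
    hence "(Y q' a - Y q a)^2 = 0" using b_pos[of a] Dq[of a] by simp
    thus ?thesis by simp
  qed
  hence Deq: "D q' a = D q a" for a by (simp add: D_Y)
  hence veq: "vel b s2 g q' k a = vel b s2 g q k a" for k a by (simp add: vel_eq)
  obtain lam where l1: "\<And>k c. c \<in> S k \<Longrightarrow> vel b s2 g q k c \<le> lam k"
    and l2: "\<And>k c. q k c > 0 \<Longrightarrow> vel b s2 g q k c = lam k" using lam_props[OF n1] by blast
  have inS: "x k c > 0 \<Longrightarrow> c \<in> S k" if "x \<in> red_strat_space P S" for x k c
    using red_out[OF that] by force
  have lam_pos: "lam k > 0" for k
  proof -
    obtain a where "q k a > 0" using pos_entry[OF q] by blast
    thus ?thesis using l2 Dq b_pos g_pos by (metis divide_pos_pos mult_pos_pos vel_eq)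
  qed
  have supp: "vel b s2 g q k c = lam k" if "q k c \<noteq> q' k c" for k c
  proof (cases "q k c > 0")
    case True thus ?thesis using l2 by blast
  next
    case False
    hence "q' k c > 0" using that red_nonneg[OF q, of k c] red_nonneg[OF q', of k c] by auto
    obtain a where a: "q k a > 0" using pos_entry[OF q] by blast
    have "vel b s2 g q' k a \<le> vel b s2 g q' k c"
      using lam_props[OF n2] kkt[OF n2 \<open>q' k c > 0\<close> inS[OF q a]] by blast
    thus ?thesis using l1[OF inS[OF q' \<open>q' k c > 0\<close>]] l2[OF a] veq by auto
  qed
  show ?thesis
  proof (rule ccontr)
    assume ne: "q' \<noteq> q"
    define c where "c e = lam (fst e) * (q (fst e) (snd e) - q' (fst e) (snd e))" for e
    have circ: "circ c" unfolding circ_def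
    proof (intro conjI allI)
      fix k
      show "(\<Sum>a\<in>UNIV. c (k,a)) = 0" unfolding c_def
        using red_sum_UNIV[OF q, of k] red_sum_UNIV[OF q', of k]
        by (simp add: sum_distrib_left[symmetric] sum_subtractf)
    next
      fix a
      have "(\<Sum>k\<in>UNIV. c (k,a)) = (\<Sum>k\<in>UNIV. b a / D q a * (g (k,a) * (q k a - q' k a)))"
      proof (intro sum.cong refl)
        fix k show "c (k,a) = b a / D q a * (g (k,a) * (q k a - q' k a))"
        proof (cases "q k a = q' k a")
          case False
          hence "lam k = b a * g (k,a) / D q a" using supp[of k a] by (simp add: vel_eq)
          thus ?thesis by (simp add: c_def)
        qed (simp add: c_def)
      qed
      also have "\<dots> = b a / D q a * (\<Sum>k\<in>UNIV. g (k,a) * (q k a - q' k a))"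
        by (rule sum_distrib_left[symmetric])
      also have "\<dots> = b a / D q a * (Y q a - Y q' a)"
        by (simp add: Y_def right_diff_distrib sum_subtractf)
      also have "\<dots> = 0" using Yeq by simp
      finally show "(\<Sum>k\<in>UNIV. c (k,a)) = 0" .
    qed
    have nz: "\<exists>e. c e \<noteq> 0"
    proof -
      obtain k where "q' k \<noteq> q k" using ne by (metis ext)
      then obtain a where "q' k a \<noteq> q k a" by (metis ext)
      thus ?thesis using lam_pos[of k] by (intro exI[of _ "(k,a)"]) (simp add: c_def)
    qed
    define E where "E = {e. c e \<noteq> 0}"
    have "goodc E c" using circ nz by (simp add: goodc_def E_def)
    hence ex: "\<exists>c. goodc E c" by blast
    hence gc: "goodc E (cE E)" unfolding cE_def by (rule someI_ex)
    have "(\<Sum>e\<in>UNIV. cE E e * ln (g e)) = 0"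
    proof (rule circ_log[where lam = lam and mu = "\<lambda>a. D q a / b a"])
      show "circ (cE E)" using gc by (simp add: goodc_def)
      show "lam k > 0" for k by (rule lam_pos)
      show "D q a / b a > 0" for a using Dq b_pos by simp
      fix k a assume "cE E (k,a) \<noteq> 0"
      hence "(k,a) \<in> E" using gc by (simp add: goodc_def)
      hence "q k a \<noteq> q' k a" using lam_pos by (auto simp: E_def c_def)
      hence "vel b s2 g q k a = lam k" by (rule supp)
      thus "g (k,a) = lam k * (D q a / b a)" using Dq[of a] b_pos[of a]
        by (auto simp: vel_eq field_simps)
    qed
    thus False using gen ex by (simp add: generic_def)
  qed
qed

lemma red_closed: fixes S :: "'k \<Rightarrow> 'n set" shows "closed (red_strat_space P S)"
proof -
  have ci: "continuous_on UNIV (\<lambda>x::'k \<Rightarrow> 'n \<Rightarrow> real. if a \<in> S k then 0 else x k a)" for k and a :: 'n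
    by (cases "a \<in> S k") (auto intro!: continuous_intros)
  have "red_strat_space P S = {x. \<forall>k. (\<forall>a. 0 \<le> x k a) \<and> (\<forall>a. (if a \<in> S k then 0 else x k a) = 0) \<and> (\<Sum>a\<in>S k. x k a) = P k}"
    by (auto simp: red_strat_space_def split: if_splits)
  also have "closed \<dots>"
    by (intro closed_Collect_all closed_Collect_conj closed_Collect_le closed_Collect_eq ci)
       (auto intro!: continuous_intros)
  finally show ?thesis .
qed

lemma red_compact: fixes S :: "'k \<Rightarrow> 'n set" shows "compact (red_strat_space P S)"
proof -
  have "red_strat_space P S \<subseteq> PiE UNIV (\<lambda>k. PiE UNIV (\<lambda>a. {0..P k}))"
  proof
    fix x assume x: "x \<in> red_strat_space P S"
    have "x k a \<le> P k" for k a
    proof -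
      have "x k a \<le> sum (x k) UNIV"
        by (rule member_le_sum) (auto intro: red_nonneg[OF x])
      thus ?thesis using red_sum_UNIV[OF x] by simp
    qed
    thus "x \<in> PiE UNIV (\<lambda>k. PiE UNIV (\<lambda>a. {0..P k}))" using red_nonneg[OF x] by auto
  qed
  moreover have C: "compact (PiE UNIV (\<lambda>k. PiE UNIV (\<lambda>a. {0..P k})) :: ('k \<Rightarrow> 'n \<Rightarrow> real) set)"
    by (intro compact_PiE_UNIV) simp
  have "compact (PiE UNIV (\<lambda>k. PiE UNIV (\<lambda>a. {0..P k})) \<inter> red_strat_space P S)"
    by (rule compact_Int_closed[OF C red_closed])
  thus ?thesis using \<open>red_strat_space P S \<subseteq> _\<close> by (simp add: Int_absorb1)
qed

lemma Phi_cont: "continuous_on (red_strat_space P S) Phi"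
  unfolding Phi_def D_def
proof (intro continuous_intros ballI)
  fix x a assume "x \<in> red_strat_space P S"
  thus "s2 a + (\<Sum>l\<in>UNIV. g (l,a) * x l a) \<noteq> 0" using D_pos[of x a] red_nonneg unfolding D_def by force
qed

lemma red_nonempty: fixes S :: "'k \<Rightarrow> 'n set" assumes "\<And>k. S k \<noteq> {}" shows "red_strat_space P S \<noteq> {}"
proof -
  define a0 where "a0 k = (SOME a. a \<in> S k)" for k
  have a0: "a0 k \<in> S k" for k unfolding a0_def using assms by (simp add: some_in_eq)
  define x where "x k a = (if a = a0 k then P k else 0)" for k a
  have "x \<in> red_strat_space P S"
    unfolding red_strat_space_def using P_pos a0 by (auto simp: x_def less_imp_le)
  thus ?thesis by blast
qed

lemma exists_max: assumes "\<And>k. S k \<noteq> {}"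
  shows "\<exists>q\<in>red_strat_space P S. \<forall>x\<in>red_strat_space P S. Phi x \<le> Phi q"
  using continuous_attains_sup[OF red_compact[of S] red_nonempty[OF assms] Phi_cont[of S]] by blast

lemma max_nash:
  assumes "q \<in> red_strat_space P S" "\<forall>x\<in>red_strat_space P S. Phi x \<le> Phi q"
  shows "is_nash (red_strat_space P S) (red_payoff b s2 g S) q"
  using assms by (simp add: nash_iff)

end


lemma deriv_nonpos_mono:
  fixes F F' :: "real \<Rightarrow> real"
  assumes d: "\<And>t. t \<in> {0..T} \<Longrightarrow> (F has_real_derivative F' t) (at t within {0..})"
    and n: "\<And>t. t \<in> {0..T} \<Longrightarrow> F' t \<le> 0" and s: "0 \<le> s" "s \<le> t" "t \<le> T"
  shows "F t \<le> F s"
proof -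
  have c: "continuous_on {0..T} F"
    by (rule DERIV_continuous_on[where D = F'], rule DERIV_subset[OF d]) auto
  show ?thesis
  proof (rule DERIV_nonpos_imp_decreasing_open[OF s(2)])
    fix x assume x: "s < x" "x < t"
    have "at x within {0..} = at x"
      by (rule at_within_interior) (use x s in simp)
    thus "\<exists>y. DERIV F x :> y \<and> y \<le> 0" using d[of x] n[of x] x s by auto
  next
    show "continuous_on {s..t} F" by (rule continuous_on_subset[OF c]) (use s in auto)
  qed
qed

lemma sq_bound:
  fixes x h :: "real \<Rightarrow> real"
  assumes d: "\<And>t. t \<in> {0..T} \<Longrightarrow> (x has_real_derivative x t * h t) (at t within {0..})"
    and hb: "\<And>t. t \<in> {0..T} \<Longrightarrow> \<bar>h t\<bar> \<le> M" and t: "t \<in> {0..T}"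
  shows "(x t)^2 * exp (- 2 * M * t) \<le> (x 0)^2" and "(x 0)^2 \<le> (x t)^2 * exp (2 * M * t)"
proof -
  have "(\<lambda>s. (x s)^2 * exp (- 2 * M * s)) t \<le> (\<lambda>s. (x s)^2 * exp (- 2 * M * s)) 0"
  proof (rule deriv_nonpos_mono[where F = "\<lambda>s. (x s)^2 * exp (- 2 * M * s)" and F' = "\<lambda>s. 2 * (x s)^2 * (h s - M) * exp (- 2 * M * s)"])
    fix s assume s: "s \<in> {0..T}"
    show "((\<lambda>s. (x s)^2 * exp (- 2 * M * s)) has_real_derivative 2 * (x s)^2 * (h s - M) * exp (- 2 * M * s)) (at s within {0..})"
      by (auto intro!: derivative_eq_intros d[OF s] simp: algebra_simps power2_eq_square)
    have "h s - M \<le> 0" using hb[OF s] by linarith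
    thus "2 * (x s)^2 * (h s - M) * exp (- 2 * M * s) \<le> 0"
      by (simp add: mult_nonneg_nonpos mult_nonpos_nonneg)
  qed (use t in auto)
  thus "(x t)^2 * exp (- 2 * M * t) \<le> (x 0)^2" by simp
  have "(\<lambda>s. (-1) * ((x s)^2 * exp (2 * M * s))) t \<le> (\<lambda>s. (-1) * ((x s)^2 * exp (2 * M * s))) 0"
  proof (rule deriv_nonpos_mono[where F = "\<lambda>s. (-1) * ((x s)^2 * exp (2 * M * s))" and F' = "\<lambda>s. - 2 * (x s)^2 * (h s + M) * exp (2 * M * s)"])
    fix s assume s: "s \<in> {0..T}"
    show "((\<lambda>s. (-1) * ((x s)^2 * exp (2 * M * s))) has_real_derivative - 2 * (x s)^2 * (h s + M) * exp (2 * M * s)) (at s within {0..})"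
      by (auto intro!: derivative_eq_intros d[OF s] simp: algebra_simps power2_eq_square)
    have "h s + M \<ge> 0" using hb[OF s] by linarith
    thus "- 2 * (x s)^2 * (h s + M) * exp (2 * M * s) \<le> 0"
      by (simp add: mult_nonneg_nonneg)
  qed (use t in auto)
  thus "(x 0)^2 \<le> (x t)^2 * exp (2 * M * t)" by simp
qed

locale traj = game P b s2 g for P :: "'k::finite \<Rightarrow> real" and b s2 :: "'n::finite \<Rightarrow> real" and g +
  fixes p :: "real \<Rightarrow> 'k \<Rightarrow> 'n \<Rightarrow> real"
  assumes sol: "replicator_solution P b s2 g p" and p0: "p 0 \<in> strat_space P"
begin

definition f :: "real \<Rightarrow> 'k \<Rightarrow> 'n \<Rightarrow> real" where
  "f t k a = vel b s2 g (p t) k a - avg_vel P b s2 g (p t) k"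

definition V :: "real \<Rightarrow> 'k \<Rightarrow> real" where
  "V t k = (\<Sum>c\<in>UNIV. p t k c * vel b s2 g (p t) k c)"

lemma f_eq: "f t k a = vel b s2 g (p t) k a - V t k / P k"
  by (simp add: f_def V_def avg_vel_def)

lemma deriv: "t \<ge> 0 \<Longrightarrow> ((\<lambda>s. p s k a) has_real_derivative p t k a * f t k a) (at t within {0..})"
  using sol unfolding replicator_solution_def f_def by simp

lemma pcont: "continuous_on {0..} (\<lambda>t. p t k a)"
  by (rule DERIV_continuous_on[OF deriv]) simp

lemma p0_nonneg: "p 0 k a \<ge> 0" using p0 by (simp add: strat_space_def)
lemma p0_sum: "sum (p 0 k) UNIV = P k" using p0 by (simp add: strat_space_def)

lemma f_cont:
  assumes U: "U \<subseteq> {0..}" and Dp: "\<And>s c. s \<in> U \<Longrightarrow> D (p s) c > 0"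
  shows "continuous_on U (\<lambda>s. f s k a)" and "continuous_on U (\<lambda>s. V s k)"
proof -
  have pc: "continuous_on U (\<lambda>s. p s l c)" for l c by (rule continuous_on_subset[OF pcont U])
  have Dc: "continuous_on U (\<lambda>s. D (p s) c)" for c
    unfolding D_def by (intro continuous_intros pc)
  have vc: "continuous_on U (\<lambda>s. vel b s2 g (p s) k c)" for c
    unfolding vel_eq
  proof (intro continuous_intros Dc ballI)
    fix s assume "s \<in> U" thus "D (p s) c \<noteq> 0" using Dp[of s c] by simp
  qed
  show Vc: "continuous_on U (\<lambda>s. V s k)" unfolding V_def by (intro continuous_intros pc vc)
  show "continuous_on U (\<lambda>s. f s k a)" unfolding f_eq by (intro continuous_intros vc Vc) (use P_pos[of k] in simp)
qed

lemma claimA: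
  assumes T: "T \<ge> 0" and Dp: "\<And>s c. s \<in> {0..T} \<Longrightarrow> D (p s) c > 0" and s: "s \<in> {0..T}"
  shows "(p 0 k a > 0 \<longrightarrow> p s k a > 0) \<and> (p 0 k a = 0 \<longrightarrow> p s k a = 0) \<and> sum (p s k) UNIV = P k"
proof -
  define Bf where "Bf s = (\<Sum>k\<in>UNIV. \<Sum>a\<in>UNIV. \<bar>f s k a\<bar>) + (\<Sum>k\<in>UNIV. \<bar>V s k / P k\<bar>)" for s
  have "continuous_on {0..T} Bf" unfolding Bf_def
    using f_cont[of "{0..T}"] Dp P_pos by (intro continuous_intros) (auto simp: less_imp_neq[symmetric])
  then obtain sm where "sm \<in> {0..T}" "\<forall>y\<in>{0..T}. Bf y \<le> Bf sm"
    using continuous_attains_sup[of "{0..T}" Bf] T by auto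
  define M where "M = Bf sm"
  have Mf: "\<bar>f s k a\<bar> \<le> M" if "s \<in> {0..T}" for s k a
  proof -
    have "\<bar>f s k a\<bar> \<le> (\<Sum>a\<in>UNIV. \<bar>f s k a\<bar>)" by (rule member_le_sum) auto
    also have "\<dots> \<le> (\<Sum>k\<in>UNIV. \<Sum>a\<in>UNIV. \<bar>f s k a\<bar>)"
      by (rule member_le_sum[where f = "\<lambda>k. \<Sum>a\<in>UNIV. \<bar>f s k a\<bar>"]) (auto intro: sum_nonneg)
    also have "\<dots> \<le> Bf s" unfolding Bf_def by (simp add: sum_nonneg)
    also have "\<dots> \<le> M" using \<open>\<forall>y\<in>{0..T}. Bf y \<le> Bf sm\<close> that M_def by simp
    finally show ?thesis .
  qed
  have MV: "\<bar>- (V s k / P k)\<bar> \<le> M" if "s \<in> {0..T}" for s k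
  proof -
    have "\<bar>V s k / P k\<bar> \<le> (\<Sum>k\<in>UNIV. \<bar>V s k / P k\<bar>)" by (rule member_le_sum) auto
    also have "\<dots> \<le> Bf s" unfolding Bf_def by (simp add: sum_nonneg)
    also have "\<dots> \<le> M" using \<open>\<forall>y\<in>{0..T}. Bf y \<le> Bf sm\<close> that M_def by simp
    finally show ?thesis by simp
  qed
  have dA: "((\<lambda>s. p s k a) has_real_derivative p t k a * f t k a) (at t within {0..})" if "t \<in> {0..T}" for t
    using deriv that by simp
  have pos: "p 0 k a > 0 \<longrightarrow> p s k a > 0"
  proof
    assume p0a: "p 0 k a > 0"
    have ne: "p r k a \<noteq> 0" if "r \<in> {0..T}" for r
      using sq_bound(2)[where x = "\<lambda>s. p s k a" and h = "\<lambda>s. f s k a" and T = T and M = M and t = r, OF dA Mf that] p0a by auto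
    show "p s k a > 0"
    proof (rule ccontr)
      assume "\<not> p s k a > 0"
      hence "(\<lambda>r. - p r k a) 0 \<le> 0" "0 \<le> (\<lambda>r. - p r k a) s" using p0a by auto
      moreover have "continuous_on {0..s} (\<lambda>r. - p r k a)"
        by (intro continuous_intros continuous_on_subset[OF pcont]) auto
      ultimately obtain r where "0 \<le> r" "r \<le> s" "- p r k a = 0"
        using IVT'[of "\<lambda>r. - p r k a" 0 0 s] s by auto
      thus False using ne[of r] s by auto
    qed
  qed
  have zero: "p 0 k a = 0 \<longrightarrow> p s k a = 0"
  proof
    assume "p 0 k a = 0"
    hence "(p s k a)^2 * exp (- 2 * M * s) \<le> 0"
      using sq_bound(1)[where x = "\<lambda>s. p s k a" and h = "\<lambda>s. f s k a" and T = T and M = M and t = s, OF dA Mf s] by simp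
    hence "(p s k a)^2 \<le> 0" by (simp add: mult_le_0_iff)
    thus "p s k a = 0" by simp
  qed
  have dS: "((\<lambda>s. sum (p s k) UNIV - P k) has_real_derivative (sum (p t k) UNIV - P k) * (- (V t k / P k))) (at t within {0..})"
    if "t \<in> {0..T}" for t
  proof -
    have "((\<lambda>s. sum (p s k) UNIV - P k) has_real_derivative (\<Sum>c\<in>UNIV. p t k c * f t k c) - 0) (at t within {0..})"
      by (intro derivative_intros DERIV_sum deriv) (use that in auto)
    moreover have "(\<Sum>c\<in>UNIV. p t k c * f t k c) - 0 = (sum (p t k) UNIV - P k) * (- (V t k / P k))"
    proof -
      have "(\<Sum>c\<in>UNIV. p t k c * f t k c) = V t k - sum (p t k) UNIV * (V t k / P k)"
        unfolding f_eq V_def by (simp add: right_diff_distrib sum_subtractf sum_distrib_right sum_divide_distrib)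
      thus ?thesis using P_pos[of k] by (simp add: field_simps)
    qed
    ultimately show ?thesis by simp
  qed
  have "(sum (p s k) UNIV - P k)^2 * exp (- 2 * M * s) \<le> (sum (p 0 k) UNIV - P k)^2"
    by (rule sq_bound(1)[where x = "\<lambda>s. sum (p s k) UNIV - P k" and h = "\<lambda>t. - (V t k / P k)" and T = T and M = M and t = s, OF dS MV s])
  hence "(sum (p s k) UNIV - P k)^2 \<le> 0" using p0_sum by (simp add: mult_le_0_iff)
  hence "sum (p s k) UNIV = P k" by simp
  thus ?thesis using pos zero by blast
qed

lemma Dcont: "continuous_on {0..} (\<lambda>s. D (p s) c)"
  unfolding D_def by (intro continuous_intros pcont)

lemma claimB: assumes t: "t \<ge> 0" shows "D (p t) c > 0"
proof (rule ccontr)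
  assume "\<not> ?thesis"
  hence t1: "D (p t) c \<le> 0" by simp
  define B where "B = (\<Union>c. {s \<in> {0..t}. D (p s) c \<le> 0})"
  have cB: "closed B" unfolding B_def
  proof (intro closed_UN ballI)
    fix c show "closed {s \<in> {0..t}. D (p s) c \<le> (\<lambda>_. 0) s}"
      by (rule continuous_on_closed_Collect_le) (auto intro: continuous_on_subset[OF Dcont])
  qed simp
  have tB: "t \<in> B" using t t1 by (auto simp: B_def)
  have bdd: "bdd_below B" unfolding B_def by (auto intro: bdd_belowI[of _ 0])
  define s0 where "s0 = Inf B"
  have s0B: "s0 \<in> B" unfolding s0_def using closed_contains_Inf[OF _ bdd cB] tB by blast
  have s0t: "0 \<le> s0" "s0 \<le> t" using s0B by (auto simp: B_def)
  have below: "D (p r) c > 0" if "r \<in> {0..<s0}" for r c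
  proof (rule ccontr)
    assume "\<not> ?thesis"
    hence "r \<in> B" using that s0t unfolding B_def by (auto simp: not_less)
    hence "s0 \<le> r" unfolding s0_def by (rule cInf_lower[OF _ bdd])
    thus False using that by simp
  qed
  have ge: "D (p r) c \<ge> s2 c" if r: "r \<in> {0..<s0}" for r c
  proof (rule D_ge)
    fix l
    have "(p 0 l c > 0 \<longrightarrow> p r l c > 0) \<and> (p 0 l c = 0 \<longrightarrow> p r l c = 0)"
      using claimA[of r r l c] below r by auto
    thus "p r l c \<ge> 0" using p0_nonneg[of l c] by (cases "p 0 l c > 0") auto
  qed
  have "s0 \<noteq> 0"
  proof
    assume "s0 = 0"
    hence "\<exists>c. D (p 0) c \<le> 0" using s0B by (auto simp: B_def)
    moreover have "D (p 0) c > 0" for c using D_pos p0_nonneg by blast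
    ultimately show False using not_less by blast
  qed
  hence s0p: "s0 > 0" using s0t by simp
  have "D (p s0) c \<ge> s2 c" for c
  proof (rule continuous_ge_on_closure[of "{0..<s0}" "\<lambda>r. D (p r) c"])
    show "continuous_on (closure {0..<s0}) (\<lambda>r. D (p r) c)"
      using s0p by (auto intro: continuous_on_subset[OF Dcont])
    show "s0 \<in> closure {0..<s0}" using s0p by simp
  qed (rule ge)
  hence "D (p s0) c > 0" for c using s_pos[of c] by (meson less_le_trans)
  thus False using s0B unfolding B_def using not_less by blast
qed

lemma inv: assumes "t \<ge> 0"
  shows "(p 0 k a > 0 \<longrightarrow> p t k a > 0) \<and> (p 0 k a = 0 \<longrightarrow> p t k a = 0) \<and> sum (p t k) UNIV = P k"
  using claimA[of t t k a] claimB assms by auto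

lemma p_nonneg: "t \<ge> 0 \<Longrightarrow> p t k a \<ge> 0"
  using inv[of t k a] p0_nonneg[of k a] by (cases "p 0 k a > 0") auto

lemma p_pos: "t \<ge> 0 \<Longrightarrow> a \<in> supp_vec (p 0 k) \<Longrightarrow> p t k a > 0"
  using inv[of t k a] by (simp add: supp_vec_def)

lemma p_in: assumes t: "t \<ge> 0" shows "p t \<in> red_strat_space P (\<lambda>k. supp_vec (p 0 k))"
  unfolding red_strat_space_def
proof (intro CollectI allI conjI impI)
  fix k a
  show "0 \<le> p t k a" by (rule p_nonneg[OF t])
  show "a \<notin> supp_vec (p 0 k) \<Longrightarrow> p t k a = 0"
    using inv[OF t, of k a] p0_nonneg[of k a] by (simp add: supp_vec_def)
next
  fix k
  have "sum (p t k) (supp_vec (p 0 k)) = sum (p t k) UNIV"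
  proof (rule sum.mono_neutral_left)
    show "\<forall>i\<in>UNIV - supp_vec (p 0 k). p t k i = 0"
    proof
      fix i assume "i \<in> UNIV - supp_vec (p 0 k)"
      hence "p 0 k i = 0" using p0_nonneg[of k i] by (simp add: supp_vec_def)
      thus "p t k i = 0" using inv[OF t, of k i] by simp
    qed
  qed auto
  thus "sum (p t k) (supp_vec (p 0 k)) = P k" using inv[OF t] by simp
qed

lemma Dpos: "t \<ge> 0 \<Longrightarrow> D (p t) c > 0" by (rule claimB)

lemma D_deriv: assumes t: "t \<ge> 0"
  shows "((\<lambda>s. D (p s) a) has_real_derivative (\<Sum>l\<in>UNIV. g (l,a) * (p t l a * f t l a))) (at t within {0..})"
proof -
  have "((\<lambda>s. s2 a + (\<Sum>l\<in>UNIV. g (l,a) * p s l a)) has_real_derivative 0 + (\<Sum>l\<in>UNIV. g (l,a) * (p t l a * f t l a))) (at t within {0..})"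
    by (rule DERIV_add[OF DERIV_const DERIV_sum[OF DERIV_cmult[OF deriv[OF t]]]])
  thus ?thesis unfolding D_def by simp
qed

lemma phi_deriv: assumes t: "t \<ge> 0"
  shows "((\<lambda>s. Phi (p s)) has_real_derivative (\<Sum>k\<in>UNIV. \<Sum>a\<in>UNIV. p t k a * f t k a * vel b s2 g (p t) k a)) (at t within {0..})"
proof -
  have "((\<lambda>s. Phi (p s)) has_real_derivative (\<Sum>a\<in>UNIV. b a * (1 / D (p t) a * (\<Sum>l\<in>UNIV. g (l,a) * (p t l a * f t l a))))) (at t within {0..})"
    unfolding Phi_def
    by (intro DERIV_sum DERIV_cmult DERIV_chain2[OF DERIV_ln_divide[OF Dpos[OF t]] D_deriv[OF t]])
  moreover have "(\<Sum>a\<in>UNIV. b a * (1 / D (p t) a * (\<Sum>l\<in>UNIV. g (l,a) * (p t l a * f t l a))))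
      = (\<Sum>k\<in>UNIV. \<Sum>a\<in>UNIV. p t k a * f t k a * vel b s2 g (p t) k a)"
  proof -
    have "(\<Sum>a\<in>UNIV. b a * (1 / D (p t) a * (\<Sum>l\<in>UNIV. g (l,a) * (p t l a * f t l a))))
        = (\<Sum>a\<in>UNIV. \<Sum>l\<in>UNIV. p t l a * f t l a * vel b s2 g (p t) l a)"
      by (intro sum.cong refl) (simp add: sum_distrib_left vel_eq algebra_simps)
    also have "\<dots> = (\<Sum>k\<in>UNIV. \<Sum>a\<in>UNIV. p t k a * f t k a * vel b s2 g (p t) k a)"
      by (rule sum.swap)
    finally show ?thesis .
  qed
  ultimately show ?thesis by simp
qed

lemma sum_pf: assumes t: "t \<ge> 0" shows "(\<Sum>a\<in>UNIV. p t k a * f t k a) = 0"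
proof -
  have "(\<Sum>a\<in>UNIV. p t k a * f t k a) = V t k - sum (p t k) UNIV * (V t k / P k)"
    unfolding f_eq V_def by (simp add: right_diff_distrib sum_subtractf sum_distrib_right sum_divide_distrib)
  thus ?thesis using inv[OF t, of k] P_pos[of k] by simp
qed

lemma phi_deriv_nonneg: assumes t: "t \<ge> 0"
  shows "(\<Sum>k\<in>UNIV. \<Sum>a\<in>UNIV. p t k a * f t k a * vel b s2 g (p t) k a) \<ge> 0"
proof (rule sum_nonneg)
  fix k
  have "(\<Sum>a\<in>UNIV. p t k a * f t k a * vel b s2 g (p t) k a)
      = (\<Sum>a\<in>UNIV. p t k a * (f t k a)^2) + (V t k / P k) * (\<Sum>a\<in>UNIV. p t k a * f t k a)"
    unfolding sum_distrib_left sum.distrib[symmetric]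
    by (intro sum.cong refl) (simp add: f_eq power2_eq_square algebra_simps)
  also have "\<dots> = (\<Sum>a\<in>UNIV. p t k a * (f t k a)^2)" using sum_pf[OF t] by simp
  also have "\<dots> \<ge> 0" using p_nonneg[OF t] by (intro sum_nonneg) simp
  finally show "(\<Sum>a\<in>UNIV. p t k a * f t k a * vel b s2 g (p t) k a) \<ge> 0" .
qed

lemma phi_mono: assumes "0 \<le> s" "s \<le> t" shows "Phi (p s) \<le> Phi (p t)"
proof -
  have "(\<lambda>r. - Phi (p r)) t \<le> (\<lambda>r. - Phi (p r)) s"
  proof (rule deriv_nonpos_mono[where F = "\<lambda>r. - Phi (p r)" and F' = "\<lambda>r. - (\<Sum>k\<in>UNIV. \<Sum>a\<in>UNIV. p r k a * f r k a * vel b s2 g (p r) k a)" and T = t])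
    fix r :: real assume "r \<in> {0..t}"
    thus "((\<lambda>r. - Phi (p r)) has_real_derivative - (\<Sum>k\<in>UNIV. \<Sum>a\<in>UNIV. p r k a * f r k a * vel b s2 g (p r) k a)) (at r within {0..})"
      by (intro derivative_intros phi_deriv) simp
    show "- (\<Sum>k\<in>UNIV. \<Sum>a\<in>UNIV. p r k a * f r k a * vel b s2 g (p r) k a) \<le> 0"
      using phi_deriv_nonneg \<open>r \<in> {0..t}\<close> by simp
  qed (use assms in auto)
  thus ?thesis by simp
qed

definition L :: "('k \<Rightarrow> 'n \<Rightarrow> real) \<Rightarrow> real \<Rightarrow> real" where
  "L q t = (\<Sum>k\<in>UNIV. \<Sum>a\<in>UNIV. q k a * ln (p t k a))"

lemma L_deriv:
  assumes q: "q \<in> red_strat_space P (\<lambda>k. supp_vec (p 0 k))" and t: "t \<ge> 0"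
  shows "(L q has_real_derivative (\<Sum>k\<in>UNIV. \<Sum>a\<in>UNIV. q k a * f t k a)) (at t within {0..})"
  unfolding L_def
proof (intro DERIV_sum)
  fix k a
  show "((\<lambda>s. q k a * ln (p s k a)) has_real_derivative q k a * f t k a) (at t within {0..})"
  proof (cases "q k a = 0")
    case True thus ?thesis by simp
  next
    case False
    hence "a \<in> supp_vec (p 0 k)" using red_out[OF q, of a k] by auto
    hence pp: "p t k a > 0" using p_pos[OF t] by simp
    have "((\<lambda>s. q k a * ln (p s k a)) has_real_derivative q k a * (1 / p t k a * (p t k a * f t k a))) (at t within {0..})"
      by (intro DERIV_cmult DERIV_chain2[OF DERIV_ln_divide[OF pp] deriv[OF t]])
    thus ?thesis using pp by simp
  qed
qed

lemma L_deriv_ge: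
  assumes q: "q \<in> red_strat_space P (\<lambda>k. supp_vec (p 0 k))" and t: "t \<ge> 0"
  shows "(\<Sum>k\<in>UNIV. \<Sum>a\<in>UNIV. q k a * f t k a) \<ge> Phi q - Phi (p t)"
proof -
  have "(\<Sum>k\<in>UNIV. \<Sum>a\<in>UNIV. q k a * f t k a)
     = (\<Sum>k\<in>UNIV. (\<Sum>a\<in>UNIV. q k a * vel b s2 g (p t) k a) - V t k)"
  proof (intro sum.cong refl)
    fix k
    have "(\<Sum>a\<in>UNIV. q k a * f t k a) = (\<Sum>a\<in>UNIV. q k a * vel b s2 g (p t) k a) - sum (q k) UNIV * (V t k / P k)"
      unfolding f_eq by (simp add: right_diff_distrib sum_subtractf sum_distrib_right sum_divide_distrib)
    thus "(\<Sum>a\<in>UNIV. q k a * f t k a) = (\<Sum>a\<in>UNIV. q k a * vel b s2 g (p t) k a) - V t k"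
      using red_sum_UNIV[OF q, of k] P_pos[of k] by simp
  qed
  also have "\<dots> = (\<Sum>k\<in>UNIV. \<Sum>a\<in>UNIV. q k a * vel b s2 g (p t) k a) - (\<Sum>k\<in>UNIV. \<Sum>a\<in>UNIV. p t k a * vel b s2 g (p t) k a)"
    by (simp add: sum_subtractf V_def)
  also have "\<dots> = (\<Sum>a\<in>UNIV. b a / D (p t) a * (Y q a - Y (p t) a))"
    unfolding weighted by (simp add: sum_subtractf right_diff_distrib)
  finally have eq: "(\<Sum>k\<in>UNIV. \<Sum>a\<in>UNIV. q k a * f t k a) = (\<Sum>a\<in>UNIV. b a / D (p t) a * (Y q a - Y (p t) a))" .
  have "Phi q - Phi (p t) = (\<Sum>a\<in>UNIV. b a * (ln (D q a) - ln (D (p t) a)))"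
    unfolding Phi_def by (simp add: sum_subtractf right_diff_distrib)
  also have "\<dots> \<le> (\<Sum>a\<in>UNIV. b a / D (p t) a * (Y q a - Y (p t) a))"
  proof (rule sum_mono)
    fix a
    have Dq: "D q a > 0" using D_pos red_nonneg[OF q] by blast
    have "ln (D q a) - ln (D (p t) a) \<le> (D q a - D (p t) a) / D (p t) a"
      by (rule ln_diff_le[OF Dq Dpos[OF t]])
    hence "b a * (ln (D q a) - ln (D (p t) a)) \<le> b a * ((D q a - D (p t) a) / D (p t) a)"
      using b_pos[of a] by (intro mult_left_mono) auto
    thus "b a * (ln (D q a) - ln (D (p t) a)) \<le> b a / D (p t) a * (Y q a - Y (p t) a)"
      by (simp add: D_Y)
  qed
  finally show ?thesis using eq by simp
qed

lemma L_bound: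
  assumes q: "q \<in> red_strat_space P (\<lambda>k. supp_vec (p 0 k))" and t: "t \<ge> 0"
  shows "L q t \<le> (\<Sum>k\<in>UNIV. \<Sum>a\<in>UNIV. q k a * ln (P k))"
  unfolding L_def
proof (intro sum_mono)
  fix k a
  show "q k a * ln (p t k a) \<le> q k a * ln (P k)"
  proof (cases "q k a = 0")
    case False
    hence "a \<in> supp_vec (p 0 k)" using red_out[OF q, of a k] by auto
    hence pp: "p t k a > 0" using p_pos[OF t] by simp
    have "p t k a \<le> sum (p t k) UNIV" by (rule member_le_sum) (auto intro: p_nonneg[OF t])
    hence "p t k a \<le> P k" using inv[OF t] by simp
    hence "ln (p t k a) \<le> ln (P k)" using pp by simp
    thus ?thesis using red_nonneg[OF q, of k a] by (intro mult_left_mono)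
  qed simp
qed

lemma eventually_phi:
  assumes q: "q \<in> red_strat_space P (\<lambda>k. supp_vec (p 0 k))" and m: "m < Phi q"
  shows "\<exists>t1\<ge>0. Phi (p t1) > m"
proof (rule ccontr)
  assume "\<not> ?thesis"
  hence le: "\<And>t. t \<ge> 0 \<Longrightarrow> Phi (p t) \<le> m" by (meson not_le)
  define \<delta> where "\<delta> = Phi q - m"
  have dp: "\<delta> > 0" using m by (simp add: \<delta>_def)
  define C where "C = (\<Sum>k\<in>UNIV. \<Sum>a\<in>UNIV. q k a * ln (P k))"
  define t where "t = max 0 ((C - L q 0 + 1) / \<delta>)"
  have t0: "t \<ge> 0" by (simp add: t_def)
  have "(\<lambda>s. \<delta> * s - L q s) t \<le> (\<lambda>s. \<delta> * s - L q s) 0"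
  proof (rule deriv_nonpos_mono[where F = "\<lambda>s. \<delta> * s - L q s" and F' = "\<lambda>s. \<delta> - (\<Sum>k\<in>UNIV. \<Sum>a\<in>UNIV. q k a * f s k a)" and T = t])
    fix s assume s: "s \<in> {0..t}"
    have "((\<lambda>s. \<delta> * s - L q s) has_real_derivative \<delta> * 1 - (\<Sum>k\<in>UNIV. \<Sum>a\<in>UNIV. q k a * f s k a)) (at s within {0..})"
      using s by (intro DERIV_diff DERIV_cmult DERIV_ident L_deriv[OF q]) simp
    thus "((\<lambda>s. \<delta> * s - L q s) has_real_derivative \<delta> - (\<Sum>k\<in>UNIV. \<Sum>a\<in>UNIV. q k a * f s k a)) (at s within {0..})"
      by simp
    show "\<delta> - (\<Sum>k\<in>UNIV. \<Sum>a\<in>UNIV. q k a * f s k a) \<le> 0"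
      using L_deriv_ge[OF q, of s] le[of s] s by (simp add: \<delta>_def)
  qed (use t0 in auto)
  hence "L q t \<ge> L q 0 + \<delta> * t" by simp
  moreover have "\<delta> * t \<ge> C - L q 0 + 1"
  proof -
    have "t \<ge> (C - L q 0 + 1) / \<delta>" by (simp add: t_def)
    thus ?thesis using dp by (simp add: field_simps)
  qed
  moreover have "L q t \<le> C" unfolding C_def by (rule L_bound[OF q t0])
  ultimately show False by linarith
qed

lemma converge:
  assumes q: "q \<in> red_strat_space P (\<lambda>k. supp_vec (p 0 k))"
    and qmax: "\<forall>x\<in>red_strat_space P (\<lambda>k. supp_vec (p 0 k)). Phi x \<le> Phi q"
    and uniq: "\<forall>x\<in>red_strat_space P (\<lambda>k. supp_vec (p 0 k)). Phi x = Phi q \<longrightarrow> x = q"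
  shows "((\<lambda>t. p t k0 a0) \<longlongrightarrow> q k0 a0) at_top"
proof (rule tendstoI)
  fix \<epsilon> :: real assume e: "\<epsilon> > 0"
  let ?R = "red_strat_space P (\<lambda>k. supp_vec (p 0 k))"
  define K where "K = ?R \<inter> {x. \<epsilon> \<le> \<bar>x k0 a0 - q k0 a0\<bar>}"
  have notK: "dist (p t k0 a0) (q k0 a0) < \<epsilon>" if "t \<ge> 0" "p t \<notin> K" for t
    using p_in[OF that(1)] that(2) by (auto simp: K_def dist_real_def)
  show "\<forall>\<^sub>F t in at_top. dist (p t k0 a0) (q k0 a0) < \<epsilon>"
  proof (cases "K = {}")
    case True
    thus ?thesis using notK by (auto simp: eventually_at_top_linorder intro!: exI[of _ 0])
  next
    case False
    have "closed {x::'k \<Rightarrow> 'n \<Rightarrow> real. \<epsilon> \<le> \<bar>x k0 a0 - q k0 a0\<bar>}"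
      by (intro closed_Collect_le continuous_intros)
    hence cK: "compact K" unfolding K_def by (rule compact_Int_closed[OF red_compact])
    have "continuous_on K Phi" by (rule continuous_on_subset[OF Phi_cont]) (auto simp: K_def)
    then obtain xm where xm: "xm \<in> K" "\<forall>y\<in>K. Phi y \<le> Phi xm"
      using continuous_attains_sup[OF cK False] by blast
    have "Phi xm < Phi q"
    proof -
      have "xm \<in> ?R" "xm \<noteq> q" using xm(1) e by (auto simp: K_def)
      thus ?thesis using qmax uniq by force
    qed
    then obtain t1 where t1: "t1 \<ge> 0" "Phi (p t1) > Phi xm" using eventually_phi[OF q] by blast
    show ?thesis unfolding eventually_at_top_linorder
    proof (intro exI[of _ t1] allI impI)
      fix t assume "t \<ge> t1"
      hence "Phi (p t) > Phi xm" using phi_mono[OF t1(1)] t1(2) by (meson less_le_trans)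
      hence "p t \<notin> K" using xm(2) by force
      thus "dist (p t k0 a0) (q k0 a0) < \<epsilon>" using notK \<open>t \<ge> t1\<close> t1(1) by simp
    qed
  qed
qed

end


theorem proposition1:
  fixes P :: "'k::finite \<Rightarrow> real" and b sigma2 :: "'n::finite \<Rightarrow> real"
    and mu :: "real measure"
  assumes P_pos: "\<forall>k. P k > 0"
    and b_pos: "\<forall>a. b a > 0"
    and sigma_pos: "\<forall>a. sigma2 a > 0"
    and prob: "prob_space mu"
    and borel: "sets mu = sets borel"
    and nonatomic: "\<forall>x. emeasure mu {x} = 0"
    and positive: "AE x in mu. x > 0"
  shows "AE g in PiM UNIV (\<lambda>_::'k \<times> 'n. mu).
           \<forall>p0 \<in> strat_space P. \<forall>p :: real \<Rightarrow> 'k \<Rightarrow> 'n \<Rightarrow> real.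
              p 0 = p0 \<and> replicator_solution P b sigma2 g p \<longrightarrow>
              (\<exists>q. is_nash (red_strat_space P (\<lambda>k. supp_vec (p0 k)))
                            (red_payoff b sigma2 g (\<lambda>k. supp_vec (p0 k))) q
                 \<and> (\<forall>q'. is_nash (red_strat_space P (\<lambda>k. supp_vec (p0 k)))
                            (red_payoff b sigma2 g (\<lambda>k. supp_vec (p0 k))) q' \<longrightarrow> q' = q)
                 \<and> (\<forall>k a. ((\<lambda>t. p t k a) \<longlongrightarrow> q k a) at_top))"
proof -
  have sp: "space mu = UNIV" using sets_eq_imp_space_eq[OF borel] by simp
  have ae1: "AE g in PiM UNIV (\<lambda>_::'k \<times> 'n. mu). \<forall>e. g e > 0"
  proof (rule eventually_all_finite)
    fix e :: "'k \<times> 'n"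
    show "AE g in PiM UNIV (\<lambda>_::'k \<times> 'n. mu). g e > 0"
      by (rule AE_PiM_component[where P = "\<lambda>x. x > 0"]) (use prob positive in auto)
  qed
  have ae2: "AE g in PiM UNIV (\<lambda>_::'k \<times> 'n. mu). generic g"
    unfolding generic_def
  proof (rule eventually_all_finite)
    fix E :: "('k \<times> 'n) set"
    show "AE g in PiM UNIV (\<lambda>_::'k \<times> 'n. mu). (\<exists>c. goodc E c) \<longrightarrow> (\<Sum>e\<in>UNIV. cE E e * ln (g e)) \<noteq> 0"
    proof (cases "\<exists>c. goodc E c")
      case True
      hence "goodc E (cE E)" unfolding cE_def by (rule someI_ex)
      then obtain e0 where "cE E e0 \<noteq> 0" by (auto simp: goodc_def)
      from null_lin_ln[where c = "cE E", OF prob borel nonatomic positive this]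
      show ?thesis by (rule eventually_mono) simp
    qed simp
  qed
  show ?thesis using ae1 ae2
  proof eventually_elim
    case (elim g)
    show ?case
    proof (intro ballI allI impI)
      fix p0 p assume p0: "p0 \<in> strat_space P" and pp: "p 0 = p0 \<and> replicator_solution P b sigma2 g p"
      interpret traj P b sigma2 g p
        by unfold_locales (use P_pos b_pos sigma_pos elim pp p0 in auto)
      let ?S = "\<lambda>k. supp_vec (p 0 k)"
      have Sne: "?S k \<noteq> {}" for k
      proof
        assume "?S k = {}"
        hence "p 0 k a = 0" for a using p0_nonneg[of k a] unfolding supp_vec_def by (metis empty_Collect_eq less_eq_real_def)
        thus False using p0_sum[of k] P_pos[of k] by simp
      qed
      obtain q where q: "q \<in> red_strat_space P ?S" "\<forall>x\<in>red_strat_space P ?S. Phi x \<le> Phi q"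
        using exists_max[where S = "\<lambda>k. supp_vec (p 0 k)", OF Sne] by blast
      have nq: "is_nash (red_strat_space P ?S) (red_payoff b sigma2 g ?S) q" by (rule max_nash[OF q])
      have un: "\<forall>q'. is_nash (red_strat_space P ?S) (red_payoff b sigma2 g ?S) q' \<longrightarrow> q' = q"
        using unique[OF elim(2) nq] by blast
      have uniq: "\<forall>x\<in>red_strat_space P ?S. Phi x = Phi q \<longrightarrow> x = q"
      proof (intro ballI impI)
        fix x assume "x \<in> red_strat_space P ?S" "Phi x = Phi q"
        hence "is_nash (red_strat_space P ?S) (red_payoff b sigma2 g ?S) x"
          using q(2) by (intro max_nash) auto
        thus "x = q" using un by blast
      qed
      have "\<forall>k a. ((\<lambda>t. p t k a) \<longlongrightarrow> q k a) at_top"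
        using converge[OF q uniq] by blast
      thus "\<exists>q. is_nash (red_strat_space P (\<lambda>k. supp_vec (p0 k))) (red_payoff b sigma2 g (\<lambda>k. supp_vec (p0 k))) q
                 \<and> (\<forall>q'. is_nash (red_strat_space P (\<lambda>k. supp_vec (p0 k))) (red_payoff b sigma2 g (\<lambda>k. supp_vec (p0 k))) q' \<longrightarrow> q' = q)
                 \<and> (\<forall>k a. ((\<lambda>t. p t k a) \<longlongrightarrow> q k a) at_top)"
        using nq un pp by blast
    qed
  qed
qed

end
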